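(* Let $G$ be a weighted graph as in the context. For every integer $m\geq 1$, \[\mathcal{E}_G(q_{m}^G,q_{m}^G)\leq \frac{2q_{2\lceil m/2\rceil}^G(\rho)}{m},\] where $\rho=\rho(G)$.
   Context: $G$ is a locally finite connected graph with at least two vertices, vertex set $V(G)$ and distinguished vertex $\rho=\rho(G)$; $\mu^G$ is a symmetric weight with $\mu^G_{xy}>0$ iff $\{x,y\}$ is an edge, $\mu^G_x:=\sum_y\mu^G_{xy}$, $\nu^G(A):=\sum_{x\in A}\mu^G_x$. The discrete time simple random walk $X^G$ has transition probabilities $P_G(x,y)=\mu^G_{xy}/\mu^G_x$ and law $\mathbf{P}^G_x$; $p^G_m(x,y):=\mathbf{P}^G_x(X^G_m=y)/\nu^G(\{y\})$, $q^G_m(x,y):=\frac12(p^G_m(x,y)+p^G_{m+1}(x,y))$, $q^G_m(x):=q^G_m(\rho,x)$ (so $q^G_m(\rho)=q^G_m(\rho,\rho)$). The generator is $\mathcal{L}_Gf(x)=\sum_yP_G(x,y)(f(y)-f(x))$, the inner product $(f,g)_G:=\sum_{x}f(x)g(x)\nu^G(\{x\})$, and the Dirichlet form $\mathcal{E}_G(f,g):=-(\mathcal{L}_Gf,g)_G$ on $\mathcal{F}_G:=\{f\in\mathbb{R}^{V(G)}:\mathcal{E}_G(f,f)<\infty\}$. *)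

theory Defs
  imports "HOL-Analysis.Analysis"
begin

definition nbrs :: "('a \<Rightarrow> 'a \<Rightarrow> real) \<Rightarrow> 'a \<Rightarrow> 'a set" where
  "nbrs mu x = {y. 0 < mu x y}"

definition weighted_graph :: "'a set \<Rightarrow> ('a \<Rightarrow> 'a \<Rightarrow> real) \<Rightarrow> 'a \<Rightarrow> bool" where
  "weighted_graph V mu rho \<longleftrightarrow>
     rho \<in> V \<and>
     (\<exists>x\<in>V. \<exists>y\<in>V. x \<noteq> y) \<and>
     (\<forall>x y. mu x y = mu y x) \<and>
     (\<forall>x y. 0 \<le> mu x y) \<and>
     (\<forall>x y. 0 < mu x y \<longrightarrow> x \<in> V \<and> y \<in> V) \<and>
     (\<forall>x. mu x x = 0) \<and>
     (\<forall>x\<in>V. finite (nbrs mu x)) \<and>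
     (\<forall>x\<in>V. \<forall>y\<in>V. (x, y) \<in> {(a, b). 0 < mu a b}\<^sup>*)"

definition vweight :: "('a \<Rightarrow> 'a \<Rightarrow> real) \<Rightarrow> 'a \<Rightarrow> real" where
  "vweight mu x = (\<Sum>y\<in>nbrs mu x. mu x y)"

definition trans_prob :: "('a \<Rightarrow> 'a \<Rightarrow> real) \<Rightarrow> 'a \<Rightarrow> 'a \<Rightarrow> real" where
  "trans_prob mu x y = mu x y / vweight mu x"

text \<open>step_prob mu m x y = P_x(X_m = y)\<close>
fun step_prob :: "('a \<Rightarrow> 'a \<Rightarrow> real) \<Rightarrow> nat \<Rightarrow> 'a \<Rightarrow> 'a \<Rightarrow> real" where
  "step_prob mu 0 x y = (if x = y then 1 else 0)"
| "step_prob mu (Suc m) x y = (\<Sum>z\<in>nbrs mu x. trans_prob mu x z * step_prob mu m z y)"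

definition hk_p :: "('a \<Rightarrow> 'a \<Rightarrow> real) \<Rightarrow> nat \<Rightarrow> 'a \<Rightarrow> 'a \<Rightarrow> real" where
  "hk_p mu m x y = step_prob mu m x y / vweight mu y"

definition hk_q :: "('a \<Rightarrow> 'a \<Rightarrow> real) \<Rightarrow> nat \<Rightarrow> 'a \<Rightarrow> 'a \<Rightarrow> real" where
  "hk_q mu m x y = (hk_p mu m x y + hk_p mu (Suc m) x y) / 2"

definition generator :: "('a \<Rightarrow> 'a \<Rightarrow> real) \<Rightarrow> ('a \<Rightarrow> real) \<Rightarrow> 'a \<Rightarrow> real" where
  "generator mu f x = (\<Sum>y\<in>nbrs mu x. trans_prob mu x y * (f y - f x))"

definition inner_G :: "'a set \<Rightarrow> ('a \<Rightarrow> 'a \<Rightarrow> real) \<Rightarrow> ('a \<Rightarrow> real) \<Rightarrow> ('a \<Rightarrow> real) \<Rightarrow> real" where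
  "inner_G V mu f g = infsum (\<lambda>x. f x * g x * vweight mu x) V"

definition dirichlet :: "'a set \<Rightarrow> ('a \<Rightarrow> 'a \<Rightarrow> real) \<Rightarrow> ('a \<Rightarrow> real) \<Rightarrow> ('a \<Rightarrow> real) \<Rightarrow> real" where
  "dirichlet V mu f g = - inner_G V mu (generator mu f) g"

end

theory Submission
  imports Defs
begin


fun Rb :: "('a \<Rightarrow> 'a \<Rightarrow> real) \<Rightarrow> nat \<Rightarrow> 'a \<Rightarrow> 'a set" where
  "Rb mu 0 x = {x}"
| "Rb mu (Suc n) x = (\<Union>z\<in>nbrs mu x. Rb mu n z)"

locale wg =
  fixes V :: "'a set" and mu :: "'a \<Rightarrow> 'a \<Rightarrow> real" and rho :: 'a
  assumes wg: "weighted_graph V mu rho"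
begin

lemma sym: "mu x y = mu y x" using wg unfolding weighted_graph_def by blast
lemma nonneg: "0 \<le> mu x y" using wg unfolding weighted_graph_def by blast
lemma inV: "0 < mu x y \<Longrightarrow> x \<in> V \<and> y \<in> V" using wg unfolding weighted_graph_def by blast
lemma rhoV: "rho \<in> V" using wg unfolding weighted_graph_def by blast
lemma fin_nbrs: "finite (nbrs mu x)"
proof (cases "x \<in> V")
  case True then show ?thesis using wg unfolding weighted_graph_def by blast
next
  case False then have "nbrs mu x = {}" using inV unfolding nbrs_def by auto
  then show ?thesis by simp
qed
lemma nbrs_V: "nbrs mu x \<subseteq> V" using inV unfolding nbrs_def by auto
lemma nbrs_V2: "y \<in> nbrs mu x \<Longrightarrow> x \<in> V" using inV unfolding nbrs_def by auto
lemma mu_zero: "y \<notin> nbrs mu x \<Longrightarrow> mu x y = 0" using nonneg[of x y] unfolding nbrs_def by auto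

lemma w_nonneg: "0 \<le> vweight mu x"
  unfolding vweight_def by (simp add: sum_nonneg nonneg)

lemma w_pos: assumes "x \<in> V" shows "0 < vweight mu x"
proof -
  obtain a b where ab: "a \<in> V" "b \<in> V" "a \<noteq> b" using wg unfolding weighted_graph_def by blast
  obtain y where y: "y \<in> V" "y \<noteq> x" using ab by metis
  have "(x, y) \<in> {(a, b). 0 < mu a b}\<^sup>*" using wg assms y unfolding weighted_graph_def by blast
  then obtain z where "(x, z) \<in> {(a, b). 0 < mu a b}" using y(2)
    by (metis converse_rtranclE)
  then have z: "z \<in> nbrs mu x" unfolding nbrs_def by auto
  have "mu x z \<le> vweight mu x" unfolding vweight_def
    by (rule member_le_sum[OF z]) (auto simp: nonneg fin_nbrs)
  moreover have "0 < mu x z" using z unfolding nbrs_def by auto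
  ultimately show ?thesis by linarith
qed

lemma w_zero_nbrs: "vweight mu x = 0 \<Longrightarrow> nbrs mu x = {}"
  using w_pos nbrs_V2 by force

lemma T_zero: "y \<notin> nbrs mu x \<Longrightarrow> trans_prob mu x y = 0"
  unfolding trans_prob_def by (simp add: mu_zero)

lemma wT: "vweight mu x * trans_prob mu x y = mu x y"
proof (cases "vweight mu x = 0")
  case True then show ?thesis using w_zero_nbrs mu_zero by (simp add: trans_prob_def)
qed (simp add: trans_prob_def)

lemma T_sum: "x \<in> V \<Longrightarrow> (\<Sum>y\<in>nbrs mu x. trans_prob mu x y) = 1"
  using w_pos[of x] unfolding trans_prob_def
  by (simp add: sum_divide_distrib[symmetric] vweight_def)

lemma mu_sum_le: assumes "finite A" shows "(\<Sum>y\<in>A. mu x y) \<le> vweight mu x"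
proof -
  have "(\<Sum>y\<in>A. mu x y) = (\<Sum>y\<in>A \<inter> nbrs mu x. mu x y)"
    using assms by (intro sum.mono_neutral_right) (auto simp: mu_zero)
  also have "\<dots> \<le> (\<Sum>y\<in>nbrs mu x. mu x y)"
    by (rule sum_mono2) (auto simp: fin_nbrs nonneg)
  finally show ?thesis unfolding vweight_def .
qed

lemma T_ext: assumes "finite B" "nbrs mu x \<subseteq> B"
  shows "(\<Sum>y\<in>nbrs mu x. trans_prob mu x y * g y) = (\<Sum>y\<in>B. trans_prob mu x y * g y)"
  using assms by (intro sum.mono_neutral_left) (auto simp: T_zero)

lemma R_fin: "finite (Rb mu n x)"
  by (induction n arbitrary: x) (auto simp: fin_nbrs)

lemma sp_supp: "step_prob mu n x y \<noteq> 0 \<Longrightarrow> y \<in> Rb mu n x"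
proof (induction n arbitrary: x)
  case 0 then show ?case by (auto split: if_splits)
next
  case (Suc n)
  then obtain z where "z \<in> nbrs mu x" "trans_prob mu x z * step_prob mu n z y \<noteq> 0"
    by (metis (no_types, lifting) step_prob.simps(2) sum.neutral)
  then show ?case using Suc.IH by auto
qed

lemma R_V: "x \<in> V \<Longrightarrow> Rb mu n x \<subseteq> V"
  by (induction n arbitrary: x) (use nbrs_V in auto)

lemma sp_zero: "y \<notin> Rb mu n x \<Longrightarrow> step_prob mu n x y = 0"
  using sp_supp by blast

lemma CK: "step_prob mu (a + b) x y = (\<Sum>z\<in>Rb mu a x. step_prob mu a x z * step_prob mu b z y)"
proof (induction a arbitrary: x)
  case 0 then show ?case by simp
next
  case (Suc a)
  let ?RS = "Rb mu (Suc a) x"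
  have finRS: "finite ?RS" by (rule R_fin)
  have "step_prob mu (Suc a + b) x y
     = (\<Sum>z'\<in>nbrs mu x. trans_prob mu x z' * (\<Sum>z\<in>Rb mu a z'. step_prob mu a z' z * step_prob mu b z y))"
    using Suc.IH by simp
  also have "\<dots> = (\<Sum>z'\<in>nbrs mu x. trans_prob mu x z' * (\<Sum>z\<in>?RS. step_prob mu a z' z * step_prob mu b z y))"
  proof (rule sum.cong[OF refl])
    fix z' assume z': "z' \<in> nbrs mu x"
    have "(\<Sum>z\<in>Rb mu a z'. step_prob mu a z' z * step_prob mu b z y)
        = (\<Sum>z\<in>?RS. step_prob mu a z' z * step_prob mu b z y)"
      using z' finRS by (intro sum.mono_neutral_left) (auto simp: sp_zero simp del: Rb.simps, auto)
    then show "trans_prob mu x z' * (\<Sum>z\<in>Rb mu a z'. step_prob mu a z' z * step_prob mu b z y)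
      = trans_prob mu x z' * (\<Sum>z\<in>?RS. step_prob mu a z' z * step_prob mu b z y)" by simp
  qed
  also have "\<dots> = (\<Sum>z'\<in>nbrs mu x. \<Sum>z\<in>?RS. trans_prob mu x z' * step_prob mu a z' z * step_prob mu b z y)"
    by (simp add: sum_distrib_left mult.assoc)
  also have "\<dots> = (\<Sum>z\<in>?RS. \<Sum>z'\<in>nbrs mu x. trans_prob mu x z' * step_prob mu a z' z * step_prob mu b z y)"
    by (rule sum.swap)
  also have "\<dots> = (\<Sum>z\<in>?RS. step_prob mu (Suc a) x z * step_prob mu b z y)"
    by (simp add: sum_distrib_right)
  finally show ?case .
qed

lemma sp1: "step_prob mu (Suc 0) z y = trans_prob mu z y"
proof (cases "y \<in> nbrs mu z")
  case True
  have "step_prob mu (Suc 0) z y = (\<Sum>z'\<in>nbrs mu z. trans_prob mu z z' * (if z' = y then 1 else 0))" by simp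
  also have "\<dots> = (\<Sum>z'\<in>nbrs mu z. if z' = y then trans_prob mu z z' else 0)"
    by (rule sum.cong) auto
  also have "\<dots> = trans_prob mu z y" using True fin_nbrs[of z]
    by (simp add: sum.delta')
  finally show ?thesis .
next
  case False then show ?thesis
    by (auto simp: T_zero intro!: sum.neutral)
qed

end

context wg begin

abbreviation "w \<equiv> vweight mu"
abbreviation "T \<equiv> trans_prob mu"
abbreviation "sp \<equiv> step_prob mu"

lemma rev: "w x * sp n x y = w y * sp n y x"
proof (induction n arbitrary: x y)
  case 0 then show ?case by simp
next
  case (Suc n)
  let ?U = "Rb mu n x \<union> nbrs mu y"
  have finU: "finite ?U" by (simp add: R_fin fin_nbrs)
  have "sp (Suc n) x y = (\<Sum>z\<in>Rb mu n x. sp n x z * T z y)"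
    using CK[of n "Suc 0" x y] by (simp only: sp1 add_Suc_right add_0_right)
  then have "w x * sp (Suc n) x y = w x * (\<Sum>z\<in>Rb mu n x. sp n x z * T z y)" by simp
  also have "\<dots> = (\<Sum>z\<in>Rb mu n x. w x * sp n x z * T z y)"
    by (simp add: sum_distrib_left mult.assoc)
  also have "\<dots> = (\<Sum>z\<in>?U. w x * sp n x z * T z y)"
    using finU by (intro sum.mono_neutral_left) (auto simp: sp_zero)
  also have "\<dots> = (\<Sum>z\<in>?U. sp n z x * (w z * T z y))"
    by (rule sum.cong[OF refl]) (simp add: Suc.IH[of x] mult_ac)
  also have "\<dots> = (\<Sum>z\<in>?U. w y * (T y z * sp n z x))"
    by (rule sum.cong[OF refl]) (simp add: wT mult_ac sym)
  also have "\<dots> = w y * (\<Sum>z\<in>?U. T y z * sp n z x)"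
    by (simp add: sum_distrib_left)
  also have "(\<Sum>z\<in>?U. T y z * sp n z x) = sp (Suc n) y x"
    using finU T_ext[of ?U y "\<lambda>z. sp n z x"] by simp
  finally show ?case .
qed

abbreviation "c \<equiv> w rho"
lemma c_pos: "0 < c" using w_pos rhoV by blast

lemma sp_V: "y \<in> V \<Longrightarrow> sp n y x \<noteq> 0 \<Longrightarrow> x \<in> V"
  using sp_supp R_V by blast

lemma f_alt: "hk_p mu n rho y = sp n y rho / c"
proof (cases "w y = 0")
  case True
  then have yV: "y \<notin> V" using w_pos by force
  have "sp n y rho = 0"
  proof (cases n)
    case 0 then show ?thesis using yV rhoV by auto
  next
    case (Suc k) then show ?thesis using w_zero_nbrs[OF True] by simp
  qed
  then show ?thesis using True by (simp add: hk_p_def)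
next
  case False
  then show ?thesis using rev[of rho n y] c_pos
    by (simp add: hk_p_def field_simps)
qed

lemma Pf: "(\<Sum>y\<in>nbrs mu x. T x y * hk_p mu n rho y) = hk_p mu (Suc n) rho x"
  by (simp add: f_alt sum_divide_distrib[symmetric] mult.assoc[symmetric] sum_distrib_left)

lemma f_zero: "x \<notin> Rb mu n rho \<Longrightarrow> hk_p mu n rho x = 0"
  by (simp add: hk_p_def sp_zero)

lemma fw: "hk_p mu a rho x * w x = sp a rho x"
proof (cases "sp a rho x = 0")
  case True then show ?thesis by (simp add: hk_p_def)
next
  case False
  then have "x \<in> V" using sp_V rhoV by blast
  then show ?thesis using w_pos[of x] by (simp add: hk_p_def)
qed

lemma ip_f: assumes "finite A" "Rb mu a rho \<subseteq> A"
  shows "(\<Sum>x\<in>A. hk_p mu a rho x * hk_p mu b rho x * w x) = hk_p mu (a + b) rho rho"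
proof -
  have "(\<Sum>x\<in>A. hk_p mu a rho x * hk_p mu b rho x * w x) = (\<Sum>x\<in>A. sp a rho x * sp b x rho) / c"
    by (simp add: sum_divide_distrib fw[symmetric] f_alt mult_ac)
  also have "(\<Sum>x\<in>A. sp a rho x * sp b x rho) = (\<Sum>x\<in>Rb mu a rho. sp a rho x * sp b x rho)"
    using assms by (intro sum.mono_neutral_right) (auto simp: sp_zero)
  also have "\<dots> = sp (a + b) rho rho" by (simp add: CK)
  finally show ?thesis by (simp add: hk_p_def)
qed

lemma quad: assumes "finite A" "\<And>x. x \<notin> A \<Longrightarrow> g x = 0"
  shows "0 \<le> (\<Sum>x\<in>A. (g x * g x + (\<Sum>y\<in>nbrs mu x. T x y * g y) * g x) * w x)"
proof -
  have P: "(\<Sum>y\<in>nbrs mu x. T x y * g y) * w x = (\<Sum>y\<in>A. mu x y * g y)" for x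
  proof -
    have "(\<Sum>y\<in>nbrs mu x. T x y * g y) * w x = (\<Sum>y\<in>nbrs mu x. mu x y * g y)"
      unfolding sum_distrib_right by (rule sum.cong[OF refl]) (metis wT mult.commute mult.left_commute)
    also have "\<dots> = (\<Sum>y\<in>nbrs mu x \<union> A. mu x y * g y)"
      using assms by (intro sum.mono_neutral_left) (auto simp: fin_nbrs mu_zero)
    also have "\<dots> = (\<Sum>y\<in>A. mu x y * g y)"
      using assms by (intro sum.mono_neutral_right) (auto simp: fin_nbrs mu_zero)
    finally show ?thesis .
  qed
  have G: "(\<Sum>y\<in>A. mu x y * (g x * g x)) \<le> g x * g x * w x" for x
    using mu_sum_le[OF assms(1), of x]
    by (simp add: sum_distrib_right[symmetric] mult.commute mult_right_mono)
  define S where "S = (\<Sum>x\<in>A. \<Sum>y\<in>A. mu x y * (g x * g x + g x * g y))"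
  have S1: "S = (\<Sum>x\<in>A. \<Sum>y\<in>A. mu x y * (g y * g y + g x * g y))"
    unfolding S_def by (subst sum.swap) (simp add: sym mult_ac)
  have "2 * S = (\<Sum>x\<in>A. \<Sum>y\<in>A. mu x y * (g x + g y)^2)"
    unfolding mult_2 apply (subst S1) apply (subst S_def)
    by (simp add: sum.distrib[symmetric] power2_eq_square algebra_simps)
  also have "\<dots> \<ge> 0" by (intro sum_nonneg) (simp add: nonneg)
  finally have S0: "0 \<le> S" by simp
  have "S \<le> (\<Sum>x\<in>A. (g x * g x + (\<Sum>y\<in>nbrs mu x. T x y * g y) * g x) * w x)"
    unfolding S_def
  proof (rule sum_mono)
    fix x assume "x \<in> A"
    have "(\<Sum>y\<in>A. mu x y * (g x * g x + g x * g y)) = (\<Sum>y\<in>A. mu x y * (g x * g x)) + (\<Sum>y\<in>A. mu x y * g y) * g x"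
      by (simp add: sum.distrib[symmetric] sum_distrib_right sum_distrib_left algebra_simps)
    also have "\<dots> \<le> g x * g x * w x + (\<Sum>y\<in>nbrs mu x. T x y * g y) * w x * g x"
      using G[of x] P[of x] by simp
    finally show "(\<Sum>y\<in>A. mu x y * (g x * g x + g x * g y)) \<le> (g x * g x + (\<Sum>y\<in>nbrs mu x. T x y * g y) * g x) * w x"
      by (simp add: algebra_simps)
  qed
  then show ?thesis using S0 by linarith
qed

end


lemma seq:
  fixes u :: "nat \<Rightarrow> real" and m :: nat
  assumes m1: "1 \<le> m"
    and mono: "\<And>j. 0 \<le> u(2*j) + u(2*j+1) - 2*u(2*j+2) - 2*u(2*j+3) + u(2*j+4) + u(2*j+5)"
    and pos: "\<And>k. 0 \<le> u(2*k) + u(2*k+1)"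
  shows "(u(2*m) + u(2*m+1) - u(2*m+2) - u(2*m+3))/4
     \<le> 2 * ((u(2 * nat \<lceil>real m / 2\<rceil>) + u(Suc (2 * nat \<lceil>real m / 2\<rceil>)))/2) / real m"
proof -
  define k where "k = nat \<lceil>real m / 2\<rceil>"
  define E where "E j = (u(2*j) + u(2*j+1) - u(2*j+2) - u(2*j+3))/4" for j
  have k1: "real m / 2 \<le> real k" unfolding k_def by linarith
  have k2: "real k < real m / 2 + 1" unfolding k_def by linarith
  have km: "k \<le> m" using k1 k2 m1 by linarith
  have k2m: "2 * k \<le> m + 1" using k2 by linarith
  have Edec: "E (Suc j) \<le> E j" for j
  proof -
    have e: "2*Suc j = 2*j+2" by simp
    have e2: "2*j+2+1 = 2*j+3" "2*j+2+2=2*j+4" "2*j+2+3=2*j+5" by simp_all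
    have gen: "0 \<le> a + b - 2*c - 2*d + e + f \<Longrightarrow> (c+d-e-f)/4 \<le> (a+b-c-d)/(4::real)" for a b c d e f
      by (simp add: field_simps)
    show ?thesis unfolding E_def e e2 by (rule gen[OF mono[of j]])
  qed
  have Edec2: "E (j + i) \<le> E j" for i j
    by (induction i) (auto intro: order_trans[OF Edec])
  have tel: "(\<Sum>j\<in>{k..k+d}. E j) = (u(2*k) + u(2*k+1) - u(2*(k+d)+2) - u(2*(k+d)+3))/4" for d
  proof (induction d)
    case 0 then show ?case by (simp add: E_def)
  next
    case (Suc d)
    have "{k..k + Suc d} = insert (k + Suc d) {k..k+d}" by auto
    then have SS: "(\<Sum>j\<in>{k..k+Suc d}. E j) = E (k + Suc d) + (\<Sum>j\<in>{k..k+d}. E j)" by simp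
    define n where "n = 2*(k+d)"
    have i: "2*(k+Suc d) = n+2" "2*(k+Suc d)+1 = n+3" "2*(k+Suc d)+2 = n+4" "2*(k+Suc d)+3 = n+5"
      "2*(k+d)+2 = n+2" "2*(k+d)+3 = n+3" unfolding n_def by simp_all
    have i2: "n+2+1 = n+3" "n+2+2 = n+4" "n+2+3 = n+5" by simp_all
    have Ek: "E (k + Suc d) = (u(n+2) + u(n+3) - u(n+4) - u(n+5))/4" 
      unfolding E_def i i2 ..
    have gen: "S' = s + Ek' \<Longrightarrow> s = (a + b - c - d')/4 \<Longrightarrow> Ek' = (c+d'-x-y)/4 \<Longrightarrow> S' = (a+b-x-y)/(4::real)"
      for S' s Ek' a b c d' x y by (simp add: field_simps)
    show ?case unfolding i i2 by (rule gen[OF _ Suc.IH[unfolded i] Ek]) (simp add: SS add.commute)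
  qed
  define d where "d = m - k"
  have md: "m = k + d" using km d_def by simp
  have "(\<Sum>j\<in>{k..k+d}. E m) \<le> (\<Sum>j\<in>{k..k+d}. E j)"
    by (rule sum_mono) (metis Edec2 atLeastAtMost_iff le_Suc_ex md add_le_cancel_left)
  also have "\<dots> \<le> (u(2*k) + u(2*k+1))/4"
  proof -
    have e: "2*Suc (k+d) = 2*(k+d)+2" "2*(k+d)+2+1 = 2*(k+d)+3" by simp_all
    have p: "0 \<le> u(2*(k+d)+2) + u(2*(k+d)+3)" using pos[of "Suc (k+d)"] unfolding e .
    have gen: "s = (a+b-x-y)/4 \<Longrightarrow> 0 \<le> x + y \<Longrightarrow> s \<le> (a+b)/(4::real)" for s a b x y
      by (simp add: field_simps)
    show ?thesis by (rule gen[OF tel[of d] p])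
  qed
  finally have main: "real (Suc d) * E m \<le> (u(2*k) + u(2*k+1))/4" by simp
  have P0: "0 \<le> u(2*k) + u(2*k+1)" by (rule pos)
  have r0: "m \<le> 4 * Suc d" using k2m md by presburger
  have r: "real m \<le> 4 * real (Suc d)" using r0 by (metis of_nat_le_iff of_nat_mult of_nat_numeral)
  have "E m \<le> (u(2*k) + u(2*k+1)) / real m"
  proof (cases "E m \<le> 0")
    case True
    have "0 \<le> (u(2*k) + u(2*k+1)) / real m" using P0 by (intro divide_nonneg_nonneg) auto
    then show ?thesis using True by linarith
  next
    case False
    have "real m * E m \<le> 4 * real (Suc d) * E m" using r False by (intro mult_right_mono) auto
    also have "\<dots> \<le> u(2*k) + u(2*k+1)" using main by (simp add: field_simps)
    finally show ?thesis using m1 by (simp add: field_simps)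
  qed
  moreover have "2 * ((u(2*k) + u(Suc (2*k)))/2) / real m = (u(2*k) + u(2*k+1)) / real m" using m1 by (simp add: field_simps)
  ultimately have fin: "E m \<le> 2 * ((u(2*k) + u(Suc (2*k)))/2) / real m" by (simp only: Suc_eq_plus1)
  show ?thesis using fin unfolding E_def k_def .
qed


context wg begin

definition AN :: "nat \<Rightarrow> 'a set" where "AN N = (\<Union>n\<in>{..N}. Rb mu n rho)"

lemma AN_fin: "finite (AN N)" unfolding AN_def by (simp add: R_fin)
lemma AN_V: "AN N \<subseteq> V" unfolding AN_def using R_V[OF rhoV] by blast
lemma AN_sub: "n \<le> N \<Longrightarrow> Rb mu n rho \<subseteq> AN N" unfolding AN_def by blast

lemma P_diff: "(\<Sum>y\<in>nbrs mu x. T x y * (hk_p mu a rho y - hk_p mu b rho y))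
   = hk_p mu (Suc a) rho x - hk_p mu (Suc b) rho x"
  by (simp add: right_diff_distrib sum_subtractf Pf)

lemma S_eq: assumes "a \<le> N"
  shows "(\<Sum>x\<in>AN N. hk_p mu a rho x * hk_p mu b rho x * w x) = hk_p mu (a + b) rho rho"
  using ip_f[OF AN_fin AN_sub[OF assms]] .

lemma mono_u:
  defines "u \<equiv> \<lambda>n. hk_p mu n rho rho"
  shows "0 \<le> u(2*j) + u(2*j+1) - 2*u(2*j+2) - 2*u(2*j+3) + u(2*j+4) + u(2*j+5)"
proof -
  define A where "A = AN (j+3)"
  define f where "f n = hk_p mu n rho" for n
  define g where "g x = f j x - f (j+2) x" for x
  have gz: "g x = 0" if "x \<notin> A" for x
  proof -
    have "x \<notin> Rb mu j rho" "x \<notin> Rb mu (j+2) rho" using that AN_sub[of j "j+3"] AN_sub[of "j+2" "j+3"]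
      unfolding A_def by auto
    then show ?thesis unfolding g_def f_def by (simp add: f_zero)
  qed
  have Pg: "(\<Sum>y\<in>nbrs mu x. T x y * g y) = f (Suc j) x - f (Suc (j+2)) x" for x
    unfolding g_def f_def by (rule P_diff)
  have q: "0 \<le> (\<Sum>x\<in>A. (g x * g x + (\<Sum>y\<in>nbrs mu x. T x y * g y) * g x) * w x)"
    using quad[OF _ gz] unfolding A_def using AN_fin by simp
  define S where "S a b = (\<Sum>x\<in>A. f a x * f b x * w x)" for a b
  have Sab: "S a b = u (a + b)" if "a \<le> j + 3" for a b
    unfolding S_def A_def f_def u_def using S_eq[OF that] .
  have "(\<Sum>x\<in>A. (g x * g x + (\<Sum>y\<in>nbrs mu x. T x y * g y) * g x) * w x)
     = (\<Sum>x\<in>A. f j x * f j x * w x - f j x * f (j+2) x * w x - f (j+2) x * f j x * w x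
           + f (j+2) x * f (j+2) x * w x + f (Suc j) x * f j x * w x - f (Suc j) x * f (j+2) x * w x
           - f (Suc (j+2)) x * f j x * w x + f (Suc (j+2)) x * f (j+2) x * w x)"
    unfolding Pg by (rule sum.cong[OF refl]) (simp add: g_def algebra_simps)
  also have "\<dots> = S j j - S j (j+2) - S (j+2) j + S (j+2) (j+2) + S (Suc j) j - S (Suc j) (j+2)
           - S (Suc (j+2)) j + S (Suc (j+2)) (j+2)"
    unfolding S_def by (simp only: sum.distrib sum_subtractf)
  also have "\<dots> = u (j+j) - u (j+(j+2)) - u (j+2+j) + u (j+2+(j+2)) + u (Suc j + j) - u (Suc j + (j+2))
           - u (Suc (j+2) + j) + u (Suc (j+2) + (j+2))"
    by (simp only: Sab le_add1 add_le_mono Suc_le_mono le_refl)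
  finally have q2: "0 \<le> u (j+j) - u (j+(j+2)) - u (j+2+j) + u (j+2+(j+2)) + u (Suc j + j) - u (Suc j + (j+2))
           - u (Suc (j+2) + j) + u (Suc (j+2) + (j+2))" using q by simp
  have e: "j+j = 2*j" "j+(j+2) = 2*j+2" "j+2+j = 2*j+2" "j+2+(j+2) = 2*j+4" "Suc j + j = 2*j+1"
     "Suc j + (j+2) = 2*j+3" "Suc (j+2) + j = 2*j+3" "Suc (j+2) + (j+2) = 2*j+5" by simp_all
  show ?thesis using q2 unfolding e by linarith
qed

lemma pos_u:
  defines "u \<equiv> \<lambda>n. hk_p mu n rho rho"
  shows "0 \<le> u(2*k) + u(2*k+1)"
proof -
  define A where "A = AN (k+1)"
  define g where "g = hk_p mu k rho"
  have gz: "g x = 0" if "x \<notin> A" for x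
  proof -
    have "x \<notin> Rb mu k rho" using that AN_sub[of k "k+1"] unfolding A_def by auto
    then show ?thesis unfolding g_def by (simp add: f_zero)
  qed
  have q: "0 \<le> (\<Sum>x\<in>A. (g x * g x + (\<Sum>y\<in>nbrs mu x. T x y * g y) * g x) * w x)"
    using quad[OF _ gz] unfolding A_def using AN_fin by simp
  also have "\<dots> = (\<Sum>x\<in>A. g x * g x * w x) + (\<Sum>x\<in>A. hk_p mu (Suc k) rho x * g x * w x)"
    unfolding g_def Pf by (simp add: sum.distrib[symmetric] algebra_simps)
  also have "\<dots> = u (k + k) + u (Suc k + k)"
    unfolding g_def A_def u_def by (simp add: S_eq)
  finally show ?thesis by (simp add: mult_2)
qed

end

context wg begin

lemma E_form:
  defines "u \<equiv> \<lambda>n. hk_p mu n rho rho"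
  shows "dirichlet V mu (hk_q mu m rho) (hk_q mu m rho) = (u(2*m) + u(2*m+1) - u(2*m+2) - u(2*m+3))/4"
proof -
  define A where "A = AN (m+2)"
  define f where "f n = hk_p mu n rho" for n
  define q where "q = hk_q mu m rho"
  have finA: "finite A" unfolding A_def by (rule AN_fin)
  have AV: "A \<subseteq> V" unfolding A_def by (rule AN_V)
  have qf: "q x = (f m x + f (Suc m) x)/2" for x unfolding q_def f_def hk_q_def ..
  define F where "F x = generator mu q x * q x * w x" for x
  have qz: "q x = 0" if "x \<notin> A" for x
  proof -
    have "x \<notin> Rb mu m rho" "x \<notin> Rb mu (Suc m) rho" using that AN_sub[of m "m+2"] AN_sub[of "Suc m" "m+2"]
      unfolding A_def by auto
    then show ?thesis unfolding qf f_def by (simp add: f_zero)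
  qed
  have "inner_G V mu (generator mu q) q = infsum F V" unfolding inner_G_def F_def ..
  also have "\<dots> = infsum F A"
    by (rule infsum_cong_neutral) (use AV qz F_def in auto)
  also have "\<dots> = sum F A" using finA by simp
  finally have I: "inner_G V mu (generator mu q) q = sum F A" .
  have gen: "generator mu q x = (f (Suc m) x + f (Suc (Suc m)) x)/2 - q x" if "x \<in> A" for x
  proof -
    have xV: "x \<in> V" using that AV by blast
    have "generator mu q x = (\<Sum>y\<in>nbrs mu x. T x y * q y) - (\<Sum>y\<in>nbrs mu x. T x y) * q x"
      unfolding generator_def by (simp add: right_diff_distrib sum_subtractf sum_distrib_right)
    also have "(\<Sum>y\<in>nbrs mu x. T x y * q y) = ((\<Sum>y\<in>nbrs mu x. T x y * f m y) + (\<Sum>y\<in>nbrs mu x. T x y * f (Suc m) y))/2"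
      unfolding qf by (simp add: sum.distrib[symmetric] sum_divide_distrib distrib_left)
    also have "\<dots> = (f (Suc m) x + f (Suc (Suc m)) x)/2" unfolding f_def Pf ..
    finally show ?thesis using T_sum[OF xV] by simp
  qed
  define S where "S a b = (\<Sum>x\<in>A. f a x * f b x * w x)" for a b
  have Sab: "S a b = u (a + b)" if "a \<le> m + 2" for a b
    unfolding S_def A_def f_def u_def using S_eq[OF that] .
  have "- sum F A = (\<Sum>x\<in>A. (f m x * f m x * w x + f m x * f (Suc m) x * w x
        - f (Suc (Suc m)) x * f m x * w x - f (Suc (Suc m)) x * f (Suc m) x * w x) / 4)"
    unfolding sum_negf[symmetric]
    by (rule sum.cong[OF refl]) (simp add: F_def gen qf field_simps)
  also have "\<dots> = (S m m + S m (Suc m) - S (Suc (Suc m)) m - S (Suc (Suc m)) (Suc m)) / 4"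
    unfolding S_def by (simp only: sum_divide_distrib[symmetric] sum.distrib sum_subtractf)
  also have "\<dots> = (u (m+m) + u (m + Suc m) - u (Suc (Suc m) + m) - u (Suc (Suc m) + Suc m)) / 4"
    by (simp only: Sab le_add1 le_refl Suc_le_mono add_le_mono Suc_leI le_SucI)
  finally have R: "- sum F A = (u (m+m) + u (m + Suc m) - u (Suc (Suc m) + m) - u (Suc (Suc m) + Suc m)) / 4" .
  have e: "m+m = 2*m" "m + Suc m = 2*m+1" "Suc (Suc m) + m = 2*m+2" "Suc (Suc m) + Suc m = 2*m+3" by simp_all
  show ?thesis unfolding dirichlet_def q_def[symmetric] I R e ..
qed

end

theorem lemma4p2:
  fixes V :: "'a set" and mu :: "'a \<Rightarrow> 'a \<Rightarrow> real" and rho :: 'a and m :: nat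
  assumes "weighted_graph V mu rho" and "1 \<le> m"
  shows "dirichlet V mu (hk_q mu m rho) (hk_q mu m rho)
           \<le> 2 * hk_q mu (2 * nat \<lceil>real m / 2\<rceil>) rho rho / real m"
proof -
  interpret wg V mu rho by (rule wg.intro) (rule assms(1))
  define u where "u = (\<lambda>n. hk_p mu n rho rho)"
  have "dirichlet V mu (hk_q mu m rho) (hk_q mu m rho) = (u(2*m) + u(2*m+1) - u(2*m+2) - u(2*m+3))/4"
    unfolding u_def by (rule E_form)
  also have "\<dots> \<le> 2 * ((u(2 * nat \<lceil>real m / 2\<rceil>) + u(Suc (2 * nat \<lceil>real m / 2\<rceil>)))/2) / real m"
    by (rule seq[OF assms(2)]) (unfold u_def, rule mono_u, rule pos_u)
  also have "\<dots> = 2 * hk_q mu (2 * nat \<lceil>real m / 2\<rceil>) rho rho / real m"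
    unfolding u_def hk_q_def ..
  finally show ?thesis .
qed


end
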